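(* Let $N\ge 2$ be an integer and write $N=2l+1$ or $N=2l+2$ with $l\ge 0$ an integer. Let $P_N(\zeta)=\prod_{n=1}^N(\zeta-\zeta_n)$ be a monic complex polynomial of degree $N$, and define the weighted symmetric functions $\Delta_n^N$ of its roots by \[ \binom{N}{n}\Delta_n^N=\sum_{1\le i_1<\dots<i_n\le N}\zeta_{i_1}\zeta_{i_2}\cdots\zeta_{i_n},\qquad 0\le n\le N, \] (so $\Delta_0^N=1$ and $P_N(\zeta)=\sum_{n=0}^N\binom{N}{n}\Delta_n^N\zeta^{N-n}$). Suppose that \[ |\Delta_{N-2}^N|=1\qquad\text{and}\qquad \Delta_n^N=\overline{\Delta_{N-2-n}^N}\,\Delta_{N-2}^N \] for all $1\le n\le l-1$ when $N=2l+1$, and for all $1\le n\le l$ when $N=2l+2$. Suppose moreover that none of the roots $\zeta_n$ lies on the unit circle $|\zeta|=1$. Then the number of roots of $P_N$ (counted with multiplicity) lying inside the unit circle is less than or equal to $1+N/2$.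
   Context: $\overline{w}$ denotes complex conjugation. These relations amount to $N-2$ real conditions on the coefficients of $P_N$, giving a real $(N+2)$-dimensional family of degree $N$ polynomials. *)

theory Defs
  imports Complex_Main
begin

text \<open>Roots are given as a function z indexed by 1..N (repetitions = multiplicity).
  Weighted elementary symmetric function: (N choose n) * Delta N z n = e_n(z_1,...,z_N).\<close>
definition Delta :: "nat \<Rightarrow> (nat \<Rightarrow> complex) \<Rightarrow> nat \<Rightarrow> complex" where
  "Delta N z n = (\<Sum>S\<in>{S. S \<subseteq> {1..N} \<and> card S = n}. \<Prod>i\<in>S. z i) / of_nat (N choose n)"

end

theory Submission
  imports Defs "HOL-Analysis.Analysis"
begin


lemma core:
  fixes g :: "real \<Rightarrow> complex" and Y Y' F :: "real \<Rightarrow> real" and a b T :: real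
  assumes cont: "continuous_on UNIV g" and T: "0 \<le> T"
    and a: "a > 0" and b: "b > 0"
    and dY: "\<And>s. (Y has_real_derivative Y' s) (at s)"
    and dF: "\<And>s. (F has_real_derivative a * Y s) (at s)"
    and Ydef: "\<And>s. Y s = Im (exp (g s))"
    and Fdef: "\<And>s. F s = b * Re (exp (g s)) + Y' s"
  shows "Im (g T) < Im (g 0) + 2*pi"
proof (rule ccontr)
  assume H: "\<not> Im (g T) < Im (g 0) + 2*pi"
  define \<theta> where "\<theta> = (\<lambda>t. Im (g t))"
  have cth: "continuous_on UNIV \<theta>" unfolding \<theta>_def
    by (intro continuous_intros cont)
  have cthS: "continuous_on S \<theta>" for S using cth continuous_on_subset by blast
  define m where "m = \<lceil>\<theta> 0 / pi\<rceil>"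
  define L where "L = of_int m * pi"
  have L1: "\<theta> 0 \<le> L" unfolding L_def m_def
    by (metis ceiling_correct divide_le_eq pi_gt_zero mult.commute)
  have L2: "L < \<theta> 0 + pi" unfolding L_def m_def
  proof -
    have "of_int \<lceil>\<theta> 0 / pi\<rceil> < \<theta> 0 / pi + 1" by linarith
    then have "of_int \<lceil>\<theta> 0 / pi\<rceil> * pi < (\<theta> 0 / pi + 1) * pi" by simp
    also have "\<dots> = \<theta> 0 + pi" by (simp add: field_simps)
    finally show "of_int \<lceil>\<theta> 0 / pi\<rceil> * pi < \<theta> 0 + pi" .
  qed
  have sinL: "sin L = 0" unfolding L_def by (simp add: sin_zero_iff_int2)
  define \<epsilon> where "\<epsilon> = cos L"
  have eps2: "\<epsilon> * \<epsilon> = 1" unfolding \<epsilon>_def using sin_cos_squared_add[of L] sinL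
    by (simp add: power2_eq_square)
  have thT: "L + pi \<le> \<theta> T" using H L2 unfolding \<theta>_def by linarith
  define S1 where "S1 = {0..T} \<inter> {t. L + pi \<le> \<theta> t}"
  have clS1: "closed S1" unfolding S1_def
    by (intro closed_Int closed_atLeastAtMost closed_Collect_le cth continuous_on_const)
  have neS1: "S1 \<noteq> {}" using thT T unfolding S1_def by auto
  have bS1: "bdd_below S1" unfolding S1_def by (rule bdd_belowI[of _ 0]) auto
  define \<sigma> where "\<sigma> = Inf S1"
  have sS1: "\<sigma> \<in> S1" unfolding \<sigma>_def using closed_contains_Inf[OF neS1 bS1 clS1] .
  have sig_le: "\<And>t. t \<in> S1 \<Longrightarrow> \<sigma> \<le> t" unfolding \<sigma>_def using bS1 by (simp add: cInf_lower)
  have s0: "0 \<le> \<sigma>" "\<sigma> \<le> T" using sS1 unfolding S1_def by auto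
  have thsig: "\<theta> \<sigma> = L + pi"
  proof -
    have "\<theta> 0 \<le> L + pi" using L1 pi_gt_zero by linarith
    moreover have "L + pi \<le> \<theta> \<sigma>" using sS1 unfolding S1_def by auto
    ultimately obtain t where t: "0 \<le> t" "t \<le> \<sigma>" "\<theta> t = L + pi"
      using IVT'[of \<theta> 0 "L+pi" \<sigma>] s0 cthS by auto
    then have "t \<in> S1" using s0 unfolding S1_def by auto
    then have "\<sigma> \<le> t" by (rule sig_le)
    then show ?thesis using t by simp
  qed
  have below: "\<And>t. 0 \<le> t \<Longrightarrow> t < \<sigma> \<Longrightarrow> \<theta> t < L + pi"
  proof (rule ccontr)
    fix t assume "0 \<le> t" "t < \<sigma>" "\<not> \<theta> t < L + pi"
    then have "t \<in> S1" using s0 unfolding S1_def by auto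
    then show False using sig_le \<open>t < \<sigma>\<close> by fastforce
  qed
  define S2 where "S2 = {0..\<sigma>} \<inter> {t. \<theta> t \<le> L}"
  have clS2: "closed S2" unfolding S2_def
    by (intro closed_Int closed_atLeastAtMost closed_Collect_le cth continuous_on_const)
  have neS2: "S2 \<noteq> {}" using L1 s0 unfolding S2_def by auto
  have bS2: "bdd_above S2" unfolding S2_def by (rule bdd_aboveI[of _ \<sigma>]) auto
  define \<tau> where "\<tau> = Sup S2"
  have tS2: "\<tau> \<in> S2" unfolding \<tau>_def using closed_contains_Sup[OF neS2 bS2 clS2] .
  have tau_ge: "\<And>t. t \<in> S2 \<Longrightarrow> t \<le> \<tau>" unfolding \<tau>_def using bS2 by (simp add: cSup_upper)
  have t0: "0 \<le> \<tau>" "\<tau> \<le> \<sigma>" using tS2 unfolding S2_def by auto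
  have thtau: "\<theta> \<tau> = L"
  proof -
    have "\<theta> \<tau> \<le> L" using tS2 unfolding S2_def by auto
    moreover have "L \<le> \<theta> \<sigma>" using thsig by simp
    ultimately obtain t where t: "\<tau> \<le> t" "t \<le> \<sigma>" "\<theta> t = L"
      using IVT'[of \<theta> \<tau> L \<sigma>] t0 cthS by auto
    then have "t \<in> S2" using t0 unfolding S2_def by auto
    then have "t \<le> \<tau>" by (rule tau_ge)
    then show ?thesis using t by simp
  qed
  have tls: "\<tau> < \<sigma>" using t0 thtau thsig by (metis order_le_less pi_gt_zero less_add_same_cancel1 less_irrefl)
  have above: "\<And>t. \<tau> < t \<Longrightarrow> t \<le> \<sigma> \<Longrightarrow> L < \<theta> t"
  proof (rule ccontr)
    fix t assume "\<tau> < t" "t \<le> \<sigma>" "\<not> L < \<theta> t"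
    then have "t \<in> S2" using t0 unfolding S2_def by auto
    then show False using tau_ge \<open>\<tau> < t\<close> by fastforce
  qed
  have XY: "\<And>t. Y t = exp (Re (g t)) * sin (\<theta> t)" "\<And>t. Re (exp (g t)) = exp (Re (g t)) * cos (\<theta> t)"
    unfolding \<theta>_def by (simp_all add: Ydef Im_exp Re_exp)
  have sin_shift: "sin x = \<epsilon> * sin (x - L)" for x
    using sin_add[of L "x - L"] sinL unfolding \<epsilon>_def by simp
  have cos_shift: "cos x = \<epsilon> * cos (x - L)" for x
    using cos_add[of L "x - L"] sinL unfolding \<epsilon>_def by simp
  have inside: "\<And>t. \<tau> < t \<Longrightarrow> t < \<sigma> \<Longrightarrow> \<epsilon> * Y t > 0"
  proof -
    fix t assume "\<tau> < t" "t < \<sigma>"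
    then have "L < \<theta> t" "\<theta> t < L + pi" using above below t0 by auto
    then have "sin (\<theta> t - L) > 0" by (intro sin_gt_zero) auto
    then have "\<epsilon> * sin (\<theta> t) > 0" using sin_shift[of "\<theta> t"] eps2
      by (metis mult.assoc mult_1)
    then show "\<epsilon> * Y t > 0" using XY(1)[of t]
      by (metis mult.left_commute mult_pos_pos exp_gt_zero)
  qed
  have Ytau: "Y \<tau> = 0" "Y \<sigma> = 0" using XY(1) thtau thsig sinL by simp_all
  have Xtau: "\<epsilon> * Re (exp (g \<tau>)) > 0"
  proof -
    have "Re (exp (g \<tau>)) = \<epsilon> * exp (Re (g \<tau>))" using XY(2)[of \<tau>] thtau unfolding \<epsilon>_def by simp
    then have "\<epsilon> * Re (exp (g \<tau>)) = (\<epsilon> * \<epsilon>) * exp (Re (g \<tau>))" by simp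
    then show ?thesis using eps2 by simp
  qed
  have Xsig: "\<epsilon> * Re (exp (g \<sigma>)) < 0"
  proof -
    have "cos (\<theta> \<sigma>) = - \<epsilon>" using thsig unfolding \<epsilon>_def by simp
    then have "\<epsilon> * Re (exp (g \<sigma>)) = - (\<epsilon> * \<epsilon>) * exp (Re (g \<sigma>))" using XY(2)[of \<sigma>] by simp
    then show ?thesis using eps2 by simp
  qed
  have dYe: "\<And>s. ((\<lambda>t. \<epsilon> * Y t) has_real_derivative \<epsilon> * Y' s) (at s)"
    using dY by (auto intro: DERIV_cmult)
  have Y'tau: "\<epsilon> * Y' \<tau> \<ge> 0"
  proof (rule ccontr)
    assume "\<not> \<epsilon> * Y' \<tau> \<ge> 0"
    then obtain d where d: "d > 0" "\<And>h. h > 0 \<Longrightarrow> h < d \<Longrightarrow> \<epsilon> * Y \<tau> > \<epsilon> * Y (\<tau> + h)"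
      using DERIV_neg_dec_right[OF dYe[of \<tau>]] by force
    define \<delta> where "\<delta> = min d (\<sigma> - \<tau>)"
    define h where "h = \<delta> / 2"
    have "h > 0" "h < d" "\<tau> + h < \<sigma>"
    proof -
      have "\<delta> \<le> \<sigma> - \<tau>" "\<delta> \<le> d" "\<delta> > 0" unfolding \<delta>_def
        using d(1) tls by auto
      then show "h > 0" "h < d" "\<tau> + h < \<sigma>" unfolding h_def apply - apply linarith apply linarith apply linarith done
    qed
    then have "\<epsilon> * Y (\<tau> + h) > 0" using inside by auto
    then show False using d(2)[OF \<open>h > 0\<close> \<open>h < d\<close>] Ytau by simp
  qed
  have Y'sig: "\<epsilon> * Y' \<sigma> \<le> 0"
  proof (rule ccontr)
    assume "\<not> \<epsilon> * Y' \<sigma> \<le> 0"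
    then obtain d where d: "d > 0" "\<And>h. h > 0 \<Longrightarrow> h < d \<Longrightarrow> \<epsilon> * Y (\<sigma> - h) < \<epsilon> * Y \<sigma>"
      using DERIV_pos_inc_left[OF dYe[of \<sigma>]] by force
    define \<delta> where "\<delta> = min d (\<sigma> - \<tau>)"
    define h where "h = \<delta> / 2"
    have "h > 0" "h < d" "\<tau> < \<sigma> - h"
    proof -
      have "\<delta> \<le> \<sigma> - \<tau>" "\<delta> \<le> d" "\<delta> > 0" unfolding \<delta>_def
        using d(1) tls by auto
      then show "h > 0" "h < d" "\<tau> < \<sigma> - h" unfolding h_def apply - apply linarith apply linarith apply linarith done
    qed
    then have "\<epsilon> * Y (\<sigma> - h) > 0" using inside by auto
    then show False using d(2)[OF \<open>h > 0\<close> \<open>h < d\<close>] Ytau by simp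
  qed
  have dFe: "\<And>x. ((\<lambda>t. \<epsilon> * F t) has_real_derivative \<epsilon> * (a * Y x)) (at x)"
    using dF by (auto intro: DERIV_cmult)
  have mono: "\<epsilon> * F \<tau> \<le> \<epsilon> * F \<sigma>"
  proof (rule DERIV_nonneg_imp_increasing_open[of \<tau> \<sigma> "\<lambda>t. \<epsilon> * F t"])
    show "\<tau> \<le> \<sigma>" using tls by simp
    show "continuous_on {\<tau>..\<sigma>} (\<lambda>t. \<epsilon> * F t)"
      using dFe by (meson DERIV_isCont continuous_at_imp_continuous_on)
    fix x assume x: "\<tau> < x" "x < \<sigma>"
    have "\<epsilon> * Y x \<ge> 0" using inside x by force
    then have "\<epsilon> * (a * Y x) \<ge> 0" using a by (metis mult.left_commute mult_nonneg_nonneg less_imp_le)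
    then show "\<exists>y. ((\<lambda>t. \<epsilon> * F t) has_real_derivative y) (at x) \<and> 0 \<le> y" using dFe by blast
  qed
  have "\<epsilon> * (b * Re (exp (g \<tau>))) = b * (\<epsilon> * Re (exp (g \<tau>)))" by simp
  moreover have "b * (\<epsilon> * Re (exp (g \<tau>))) > 0" using b Xtau by simp
  moreover have "\<epsilon> * F \<tau> = b * (\<epsilon> * Re (exp (g \<tau>))) + \<epsilon> * Y' \<tau>" by (simp add: Fdef algebra_simps)
  ultimately have "\<epsilon> * F \<tau> > 0" using Y'tau by linarith
  moreover
  have "\<epsilon> * (b * Re (exp (g \<sigma>))) = b * (\<epsilon> * Re (exp (g \<sigma>)))" by simp
  moreover have "b * (\<epsilon> * Re (exp (g \<sigma>))) < 0" using b Xsig by (simp add: mult_pos_neg)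
  moreover have "\<epsilon> * F \<sigma> = b * (\<epsilon> * Re (exp (g \<sigma>))) + \<epsilon> * Y' \<sigma>" by (simp add: Fdef algebra_simps)
  ultimately have "\<epsilon> * F \<sigma> < 0" using Y'sig by linarith
  moreover note \<open>\<epsilon> * F \<tau> > 0\<close>
  ultimately show False using mono by simp
qed



lemma expand_prod:
  fixes z :: "nat \<Rightarrow> complex" and u w :: complex
  shows "(\<Prod>j\<in>{1..N}. z j * u + w) =
    (\<Sum>n=0..N. (\<Sum>S\<in>{S. S \<subseteq> {1..N} \<and> card S = n}. \<Prod>i\<in>S. z i) * u^n * w^(N-n))"
proof -
  define A where "A = {1..N}"
  have fA: "finite A" and cA: "card A = N" unfolding A_def by auto
  have "(\<Prod>j\<in>A. z j * u + w) = (\<Sum>X\<in>Pow A. (\<Prod>j\<in>X. z j * u) * (\<Prod>j\<in>A-X. w))"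
    by (rule prod_add[OF fA])
  also have "\<dots> = (\<Sum>X\<in>Pow A. (\<Prod>j\<in>X. z j) * u^card X * w^(N - card X))"
  proof (intro sum.cong refl)
    fix X assume "X \<in> Pow A"
    then have "X \<subseteq> A" by auto
    then have "finite X" using fA finite_subset by blast
    then have "card (A - X) = N - card X" using \<open>X \<subseteq> A\<close> cA by (simp add: card_Diff_subset)
    then show "(\<Prod>j\<in>X. z j * u) * (\<Prod>j\<in>A-X. w) = (\<Prod>j\<in>X. z j) * u^card X * w^(N - card X)"
      by (simp add: prod.distrib)
  qed
  also have "\<dots> = (\<Sum>n\<in>{0..N}. \<Sum>X\<in>{X. X \<in> Pow A \<and> card X = n}. (\<Prod>j\<in>X. z j) * u^card X * w^(N - card X))"
  proof (rule sum.group[symmetric])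
    show "finite (Pow A)" using fA by simp
    show "finite {0..N}" by simp
    show "card ` Pow A \<subseteq> {0..N}"
    proof
      fix x assume "x \<in> card ` Pow A"
      then obtain X where "X \<subseteq> A" "x = card X" by auto
      then show "x \<in> {0..N}" using card_mono[OF fA] cA by auto
    qed
  qed
  also have "\<dots> = (\<Sum>n=0..N. (\<Sum>S\<in>{S. S \<subseteq> {1..N} \<and> card S = n}. \<Prod>i\<in>S. z i) * u^n * w^(N-n))"
  proof (intro sum.cong refl)
    fix n assume "n \<in> {0..N}"
    have "{X. X \<in> Pow A \<and> card X = n} = {S. S \<subseteq> {1..N} \<and> card S = n}" unfolding A_def by auto
    then show "(\<Sum>X\<in>{X. X \<in> Pow A \<and> card X = n}. (\<Prod>j\<in>X. z j) * u^card X * w^(N - card X)) =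
      (\<Sum>S\<in>{S. S \<subseteq> {1..N} \<and> card S = n}. \<Prod>i\<in>S. z i) * u^n * w^(N-n)"
      by (simp add: sum_distrib_right)
  qed
  finally show ?thesis unfolding A_def .
qed

lemma binom_id:
  fixes N n :: nat
  assumes "n + 2 \<le> N"
  shows "(n+1)*(n+2)*(N choose (n+2)) = (N-n-1)*(N-n)*(N choose n)"
proof -
  have a1: "(N - n) * (N choose n) = N * ((N - 1) choose n)" by (rule binomial_absorb_comp)
  have a2: "((N-1) - n) * ((N-1) choose n) = (N-1) * ((N - 1 - 1) choose n)"
    by (rule binomial_absorb_comp)
  have b1': "Suc (Suc n) * (N choose Suc (Suc n)) = N * ((N - 1) choose Suc n)"
    by (rule binomial_absorption)
  have e1: "Suc (n + 1) = n + 2" "Suc n = n + 1" by simp_all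
  have b1: "(n+2) * (N choose (n+2)) = N * ((N - 1) choose (n+1))"
    using b1' unfolding e1(2) unfolding e1(1) .
  have b2': "Suc n * ((N-1) choose Suc n) = (N-1) * ((N - 1 - 1) choose n)"
    by (rule binomial_absorption)
  have b2: "(n+1) * ((N-1) choose (n+1)) = (N-1) * ((N - 1 - 1) choose n)"
    using b2' unfolding e1(2) .
  have "(n+1)*(n+2)*(N choose (n+2)) = (n+1) * ((n+2) * (N choose (n+2)))"
    by (rule mult.assoc)
  also have "\<dots> = (n+1) * (N * ((N - 1) choose (n+1)))" by (simp only: b1)
  also have "\<dots> = N * ((n+1) * ((N - 1) choose (n+1)))" by (rule mult.left_commute)
  also have "\<dots> = N * ((N-1) * ((N - 1 - 1) choose n))" by (simp only: b2)
  also have "\<dots> = N * (((N-1) - n) * ((N-1) choose n))" by (simp only: a2)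
  also have "\<dots> = ((N-1) - n) * (N * ((N-1) choose n))" by (rule mult.left_commute)
  also have "\<dots> = ((N-1) - n) * ((N - n) * (N choose n))" by (simp only: a1)
  also have "\<dots> = (N-n-1)*(N-n)*(N choose n)" by (simp add: mult.assoc)
  finally show ?thesis .
qed



definition EE :: "real \<Rightarrow> complex" where "EE x = exp (\<i> * complex_of_real x)"
definition nu :: "nat \<Rightarrow> nat \<Rightarrow> real" where "nu N n = real N - 2 * real n - 2"
definition kap :: "nat \<Rightarrow> nat \<Rightarrow> real" where "kap N n = (nu N n + real N) * (nu N n + real N + 2)"
definition esym :: "nat \<Rightarrow> (nat \<Rightarrow> complex) \<Rightarrow> nat \<Rightarrow> complex" where
  "esym N z n = (\<Sum>S\<in>{S. S \<subseteq> {1..N} \<and> card S = n}. \<Prod>i\<in>S. z i)"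

lemma D0: "Delta N z 0 = 1"
proof -
  have "card S = 0 \<longleftrightarrow> S = {}" if "S \<subseteq> {1..N}" for S :: "nat set"
    using finite_subset[OF that] by auto
  then have "{S. S \<subseteq> {1..N} \<and> card S = 0} = {{}}" by auto
  then show ?thesis by (simp add: Delta_def)
qed

lemma eD: "n \<le> N \<Longrightarrow> esym N z n = of_nat (N choose n) * Delta N z n"
  by (simp add: Delta_def esym_def)

lemma cE: "cnj (EE x) = EE (- x)" unfolding EE_def by (simp add: exp_cnj)

lemma imcnj: "S = cnj S \<Longrightarrow> Im S = 0"
  by (auto simp: complex_eq_iff)

lemma realR:
  fixes N :: nat and z :: "nat \<Rightarrow> complex" and c \<omega> :: complex
  assumes N: "N \<ge> 2" and cw: "c * \<omega> = cnj c"
    and sym: "\<And>n. n \<le> N - 2 \<Longrightarrow> Delta N z n = \<omega> * cnj (Delta N z (N - 2 - n))"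
  shows "Im (\<Sum>n=0..N. complex_of_real (kap N n) * (c * esym N z n) * EE (nu N n * s)) = 0"
proof -
  define m where "m = N - 2"
  define t where "t n = complex_of_real (kap N n) * (c * esym N z n) * EE (nu N n * s)" for n
  have s1: "(\<Sum>n=0..N. t n) = (\<Sum>n=0..m. t n)"
  proof (rule sum.mono_neutral_right)
    show "finite {0..N}" by simp
    show "{0..m} \<subseteq> {0..N}" unfolding m_def by auto
    show "\<forall>i\<in>{0..N} - {0..m}. t i = 0"
    proof
      fix i assume "i \<in> {0..N} - {0..m}"
      then have "i = N - 1 \<or> i = N" unfolding m_def using N by auto
      then have "kap N i = 0" unfolding kap_def nu_def using N by (auto simp: of_nat_diff)
      then show "t i = 0" unfolding t_def by simp
    qed
  qed
  have s2: "(\<Sum>n=0..m. t n) = (\<Sum>n=0..m. cnj (t (m - n)))"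
  proof (intro sum.cong refl)
    fix n assume "n \<in> {0..m}"
    then have n: "n \<le> m" by simp
    have nN: "n + 2 \<le> N" using n N unfolding m_def by simp
    have rmn: "real (m - n) = real N - real n - 2" using nN unfolding m_def by (simp add: of_nat_diff)
    have nu': "nu N (m - n) = - nu N n" unfolding nu_def rmn by simp
    have k1: "kap N (m - n) = 4 * ((real n + 1) * (real n + 2))"
      unfolding kap_def nu_def rmn by (simp add: algebra_simps)
    have k2: "kap N n = 4 * ((real N - real n - 1) * (real N - real n))"
      unfolding kap_def nu_def by (simp add: algebra_simps)
    have bs: "N choose (m - n) = N choose (n + 2)"
      using binomial_symmetric[of "n+2" N] nN unfolding m_def by simp
    have bi: "real ((n+1)*(n+2)*(N choose (n+2))) = real ((N-n-1)*(N-n)*(N choose n))"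
      using binom_id[OF nN] by simp
    have r1: "real ((n+1)*(n+2)*(N choose (n+2))) = (real n + 1) * (real n + 2) * real (N choose (n+2))"
      by (simp only: of_nat_mult of_nat_add of_nat_1 of_nat_numeral)
    have r2: "real ((N-n-1)*(N-n)*(N choose n)) = (real N - real n - 1) * (real N - real n) * real (N choose n)"
      using nN by (simp add: of_nat_diff)
    have bi': "(real n + 1) * (real n + 2) * real (N choose (n+2)) = (real N - real n - 1) * (real N - real n) * real (N choose n)"
      using bi unfolding r1 r2 .
    have Dm: "cnj c * cnj (Delta N z (m - n)) = c * Delta N z n"
      using sym[of n] n cw unfolding m_def by (simp add: mult.assoc[symmetric])
    have em: "cnj (esym N z (m - n)) = of_nat (N choose (n+2)) * cnj (Delta N z (m - n))"
      using eD[of "m - n" N z] bs nN unfolding m_def by simp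
    have "cnj (t (m - n)) = complex_of_real (kap N (m - n)) * (cnj c * cnj (esym N z (m - n))) * cnj (EE (nu N (m - n) * s))"
      unfolding t_def by simp
    also have "\<dots> = complex_of_real (kap N (m - n)) * (cnj c * cnj (esym N z (m - n))) * EE (nu N n * s)"
      unfolding cE nu' by simp
    also have "\<dots> = complex_of_real (kap N (m - n)) * of_nat (N choose (n+2)) * (cnj c * cnj (Delta N z (m - n))) * EE (nu N n * s)"
      unfolding em by (simp add: algebra_simps)
    also have "\<dots> = complex_of_real (4 * ((real n + 1) * (real n + 2) * real (N choose (n+2)))) * (cnj c * cnj (Delta N z (m - n))) * EE (nu N n * s)"
      unfolding k1 by (simp add: algebra_simps)
    also have "\<dots> = complex_of_real (4 * ((real N - real n - 1) * (real N - real n) * real (N choose n))) * (c * Delta N z n) * EE (nu N n * s)"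
      unfolding bi' Dm ..
    also have "\<dots> = t n"
      unfolding t_def k2 using eD[of n N z] nN by (simp add: algebra_simps)
    finally show "t n = cnj (t (m - n))" by simp
  qed
  also have "\<dots> = (\<Sum>n=0..m. cnj (t n))"
    by (subst sum.atLeastAtMost_rev) simp
  also have "\<dots> = cnj (\<Sum>n=0..m. t n)" by (simp add: cnj_sum)
  finally have s3: "(\<Sum>n=0..m. t n) = cnj (\<Sum>n=0..m. t n)" .
  have "Im (\<Sum>n=0..m. t n) = 0" using imcnj[OF s3] .
  then show ?thesis using s1 unfolding t_def by simp
qed

lemma ImE: "Im (d * EE x) = Re d * sin x + Im d * cos x"
  unfolding EE_def by (simp add: Im_exp Re_exp)
lemma ReE: "Re (d * EE x) = Re d * cos x - Im d * sin x"
  unfolding EE_def by (simp add: Im_exp Re_exp)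
lemma dIm: "((\<lambda>s. Im (d * EE (v * s))) has_real_derivative v * Re (d * EE (v * s))) (at s)"
  unfolding ImE ReE by (auto intro!: derivative_eq_intros simp: algebra_simps)
lemma dRe: "((\<lambda>s. Re (d * EE (v * s))) has_real_derivative - v * Im (d * EE (v * s))) (at s)"
  unfolding ImE ReE by (auto intro!: derivative_eq_intros simp: algebra_simps)

lemma ODE:
  fixes N :: nat and dd :: "nat \<Rightarrow> complex"
  assumes R: "\<And>s. Im (\<Sum>n=0..N. complex_of_real (kap N n) * dd n * EE (nu N n * s)) = 0"
  defines "Y \<equiv> \<lambda>s. \<Sum>n=0..N. Im (dd n * EE (nu N n * s))"
    and "Y' \<equiv> \<lambda>s. \<Sum>n=0..N. nu N n * Re (dd n * EE (nu N n * s))"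
    and "F \<equiv> \<lambda>s. 2 * (real N + 1) * (\<Sum>n=0..N. Re (dd n * EE (nu N n * s))) + (\<Sum>n=0..N. nu N n * Re (dd n * EE (nu N n * s)))"
  shows "(Y has_real_derivative Y' s) (at s)"
    and "(F has_real_derivative (real N * (real N + 2)) * Y s) (at s)"
proof -
  show "(Y has_real_derivative Y' s) (at s)"
    unfolding Y_def Y'_def by (rule DERIV_sum) (rule dIm)
  define b where "b = 2 * (real N + 1)"
  define a where "a = real N * (real N + 2)"
  have d1: "((\<lambda>s. \<Sum>n=0..N. Re (dd n * EE (nu N n * s))) has_real_derivative (\<Sum>n=0..N. - nu N n * Im (dd n * EE (nu N n * s)))) (at s)"
    by (rule DERIV_sum) (rule dRe)
  have d2: "(Y' has_real_derivative (\<Sum>n=0..N. nu N n * (- nu N n * Im (dd n * EE (nu N n * s))))) (at s)"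
    unfolding Y'_def by (rule DERIV_sum) (rule DERIV_cmult, rule dRe)
  have dF: "(F has_real_derivative b * (\<Sum>n=0..N. - nu N n * Im (dd n * EE (nu N n * s))) + (\<Sum>n=0..N. nu N n * (- nu N n * Im (dd n * EE (nu N n * s))))) (at s)"
    unfolding F_def b_def using DERIV_add[OF DERIV_cmult[OF d1] d2[unfolded Y'_def]] by simp
  have kk: "kap N n = a + b * nu N n + nu N n * nu N n" for n
    unfolding kap_def a_def b_def by (simp add: algebra_simps)
  have "(\<Sum>n=0..N. kap N n * Im (dd n * EE (nu N n * s))) = 0"
    using R[of s] by (simp add: Im_sum mult.assoc)
  then have "(\<Sum>n=0..N. (a + b * nu N n + nu N n * nu N n) * Im (dd n * EE (nu N n * s))) = 0"
    unfolding kk .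
  then have "a * Y s + (b * (\<Sum>n=0..N. nu N n * Im (dd n * EE (nu N n * s))) + (\<Sum>n=0..N. nu N n * (nu N n * Im (dd n * EE (nu N n * s))))) = 0"
    unfolding Y_def by (simp add: algebra_simps sum.distrib sum_distrib_left)
  then have "b * (\<Sum>n=0..N. - nu N n * Im (dd n * EE (nu N n * s))) + (\<Sum>n=0..N. nu N n * (- nu N n * Im (dd n * EE (nu N n * s)))) = a * Y s"
    by (simp add: sum_negf)
  then show "(F has_real_derivative (real N * (real N + 2)) * Y s) (at s)"
    using dF unfolding a_def by simp
qed

lemma EEmult: "EE x * EE y = EE (x + y)"
  unfolding EE_def by (simp add: exp_add[symmetric] algebra_simps)
lemma EEpow: "EE x ^ n = EE (real n * x)"
  unfolding EE_def by (simp add: exp_of_nat_mult[symmetric] algebra_simps)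
lemma EEnorm: "cmod (EE x) = 1" unfolding EE_def by simp
lemma EE2pi: "EE (-2 * (2*pi)) = 1" "EE (2 * (2*pi)) = 1" "EE 0 = 1"
  unfolding EE_def by (simp_all add: complex_eq_iff Re_exp Im_exp)

lemma notnp: "cmod w < 1 \<Longrightarrow> 1 + w \<notin> \<real>\<^sub>\<le>\<^sub>0"
  using abs_Re_le_cmod[of w] by (auto simp: complex_nonpos_Reals_iff)
lemma nz1: "cmod w < 1 \<Longrightarrow> 1 + w \<noteq> 0"
  using notnp by fastforce

definition Lam :: "complex \<Rightarrow> real \<Rightarrow> complex" where
  "Lam w s = (if cmod w < 1 then \<i> * complex_of_real s + Ln (1 + w * EE (- 2 * s))
      else Ln w + \<i> * complex_of_real (-s) + Ln (1 + EE (2 * s) / w))"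

lemma expLam: "cmod w \<noteq> 1 \<Longrightarrow> exp (Lam w s) = w * EE (-s) + EE s"
proof (cases "cmod w < 1")
  case True
  have n: "cmod (w * EE (- 2 * s)) < 1" using True by (simp add: norm_mult EEnorm)
  have "exp (Lam w s) = EE s * (1 + w * EE (- 2 * s))"
    unfolding Lam_def using True nz1[OF n] by (simp add: exp_add EE_def)
  also have "\<dots> = w * EE (-s) + EE s" by (simp add: algebra_simps EEmult)
  finally show ?thesis .
next
  case False
  assume "cmod w \<noteq> 1"
  then have g: "cmod w > 1" using False by simp
  then have w0: "w \<noteq> 0" by auto
  have n: "cmod (EE (2 * s) / w) < 1" using g by (simp add: norm_divide EEnorm divide_less_eq_1)
  have "exp (Lam w s) = w * EE (-s) * (1 + EE (2 * s) / w)"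
    unfolding Lam_def using False w0 nz1[OF n] by (simp add: exp_add exp_diff EE_def exp_minus divide_inverse mult_ac)
  also have "\<dots> = w * EE (-s) + EE (-s) * EE (2 * s)" using w0 by (simp add: algebra_simps)
  also have "\<dots> = w * EE (-s) + EE s" by (simp add: EEmult)
  finally show ?thesis .
qed

lemma contLam: "cmod w \<noteq> 1 \<Longrightarrow> continuous_on UNIV (Lam w)"
proof (cases "cmod w < 1")
  case True
  have n: "cmod (w * EE (- 2 * s)) < 1" for s using True by (simp add: norm_mult EEnorm)
  have "continuous_on UNIV (\<lambda>s. \<i> * complex_of_real s + Ln (1 + w * EE (- 2 * s)))"
    unfolding EE_def by (intro continuous_intros notnp n[unfolded EE_def])
  then show ?thesis unfolding Lam_def using True by simp
next
  case False
  assume "cmod w \<noteq> 1"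
  then have g: "cmod w > 1" using False by simp
  then have w0: "w \<noteq> 0" by auto
  have n: "cmod (EE (2 * s) / w) < 1" for s using g by (simp add: norm_divide EEnorm divide_less_eq_1)
  have "continuous_on UNIV (\<lambda>s. Ln w + \<i> * complex_of_real (-s) + Ln (1 + EE (2 * s) / w))"
    unfolding EE_def using w0 by (intro continuous_intros notnp n[unfolded EE_def]) auto
  then show ?thesis unfolding Lam_def using False by simp
qed

lemma ImLam: "Im (Lam w (2*pi)) = Im (Lam w 0) + (if cmod w < 1 then 2*pi else - 2*pi)"
  unfolding Lam_def using EE2pi by (simp add: mult.assoc)

lemma expg:
  assumes z: "\<And>j. j \<in> {1..N} \<Longrightarrow> cmod (z j) \<noteq> 1" and c0: "c \<noteq> 0"
  shows "exp (Ln c + \<i> * complex_of_real (- 2 * s) + (\<Sum>j\<in>{1..N}. Lam (z j) s)) =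
    (\<Sum>n=0..N. (c * esym N z n) * EE (nu N n * s))"
proof -
  have "exp (Ln c + \<i> * complex_of_real (- 2 * s) + (\<Sum>j\<in>{1..N}. Lam (z j) s)) =
      c * EE (- 2 * s) * (\<Prod>j\<in>{1..N}. exp (Lam (z j) s))"
    using c0 by (simp add: exp_add exp_diff exp_sum EE_def exp_minus divide_inverse)
  also have "\<dots> = c * EE (- 2 * s) * (\<Prod>j\<in>{1..N}. z j * EE (- s) + EE s)"
  proof -
    have "(\<Prod>j\<in>{1..N}. exp (Lam (z j) s)) = (\<Prod>j\<in>{1..N}. z j * EE (- s) + EE s)"
      by (rule prod.cong[OF refl]) (rule expLam[OF z])
    then show ?thesis by simp
  qed
  also have "\<dots> = c * EE (- 2 * s) * (\<Sum>n=0..N. esym N z n * EE (- s) ^ n * EE s ^ (N - n))"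
    unfolding expand_prod esym_def ..
  also have "\<dots> = (\<Sum>n=0..N. c * esym N z n * (EE (- 2 * s) * EE (- s) ^ n * EE s ^ (N - n)))"
    by (simp add: sum_distrib_left mult_ac)
  also have "\<dots> = (\<Sum>n=0..N. (c * esym N z n) * EE (nu N n * s))"
  proof (intro sum.cong refl)
    fix n assume "n \<in> {0..N}"
    then have n: "n \<le> N" by simp
    have "EE (- 2 * s) * EE (- s) ^ n * EE s ^ (N - n) = EE (- 2 * s + real n * (- s) + real (N - n) * s)"
      by (simp add: EEpow EEmult)
    also have "- 2 * s + real n * (- s) + real (N - n) * s = nu N n * s"
      using n unfolding nu_def by (simp add: of_nat_diff algebra_simps)
    finally show "c * esym N z n * (EE (- 2 * s) * EE (- s) ^ n * EE s ^ (N - n)) = (c * esym N z n) * EE (nu N n * s)"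
      by simp
  qed
  finally show ?thesis .
qed

lemma symL:
  fixes N l :: nat and z :: "nat \<Rightarrow> complex"
  assumes "N \<ge> 2"
    and "N = 2*l+1 \<or> N = 2*l+2"
    and nw: "cmod (Delta N z (N-2)) = 1"
    and hyp: "\<And>n. 1 \<le> n \<Longrightarrow> (N = 2*l+1 \<longrightarrow> n \<le> l-1) \<Longrightarrow> (N = 2*l+2 \<longrightarrow> n \<le> l) \<Longrightarrow>
           Delta N z n = cnj (Delta N z (N-2-n)) * Delta N z (N-2)"
    and n: "n \<le> N - 2"
  shows "Delta N z n = Delta N z (N-2) * cnj (Delta N z (N - 2 - n))"
proof -
  define m where "m = N - 2"
  define \<omega> where "\<omega> = Delta N z m"
  have ww: "\<omega> * cnj \<omega> = 1"
    using complex_norm_square[of \<omega>] nw unfolding \<omega>_def m_def by simp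
  have n: "n \<le> m" using n unfolding m_def .
  consider (a) "n = 0" | (b) "n = m" | (c) "1 \<le> n" "n < m" "(N = 2*l+1 \<longrightarrow> n \<le> l-1) \<and> (N = 2*l+2 \<longrightarrow> n \<le> l)"
    | (d) "1 \<le> n" "n < m" "\<not> ((N = 2*l+1 \<longrightarrow> n \<le> l-1) \<and> (N = 2*l+2 \<longrightarrow> n \<le> l))"
    using n by linarith
  then have "Delta N z n = \<omega> * cnj (Delta N z (m - n))"
  proof cases
    case a then show ?thesis using D0 ww by (simp add: \<omega>_def)
  next
    case b then show ?thesis using D0 by (simp add: \<omega>_def)
  next
    case c
    then have "Delta N z n = cnj (Delta N z (N-2-n)) * Delta N z (N-2)" using hyp by blast
    then show ?thesis unfolding \<omega>_def m_def by (simp add: mult.commute)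
  next
    case d
    define n' where "n' = m - n"
    have h1: "1 \<le> n'" using d unfolding n'_def by simp
    have h2: "(N = 2*l+1 \<longrightarrow> n' \<le> l-1) \<and> (N = 2*l+2 \<longrightarrow> n' \<le> l)"
      using d assms(2) unfolding n'_def m_def by auto
    have "Delta N z n' = cnj (Delta N z (N-2-n')) * Delta N z (N-2)" using hyp h1 h2 by blast
    moreover have "N - 2 - n' = n" using d unfolding n'_def m_def by simp
    ultimately have "Delta N z n' = cnj (Delta N z n) * \<omega>" unfolding \<omega>_def m_def by simp
    then have "\<omega> * cnj (Delta N z n') = (\<omega> * cnj \<omega>) * Delta N z n" by simp
    then show ?thesis using ww unfolding n'_def by simp
  qed
  then show ?thesis unfolding \<omega>_def m_def .
qed

lemma csq:
  assumes nw: "cmod \<omega> = 1"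
  shows "\<exists>c. c * \<omega> = cnj c \<and> c \<noteq> 0"
proof -
  define q where "q = csqrt \<omega>"
  have q2: "q * q = \<omega>" using power2_csqrt[of \<omega>] unfolding q_def by (simp add: power2_eq_square)
  have "cmod q * cmod q = 1" using q2 nw by (metis norm_mult)
  then have nq: "cmod q = 1"
    by (metis abs_norm_cancel mult_cancel_right1 norm_ge_zero real_sqrt_abs2 real_sqrt_mult_self real_sqrt_one)
  have qq: "cnj q * q = 1" using complex_norm_square[of q] nq by (simp add: mult.commute)
  have "cnj q * \<omega> = (cnj q * q) * q" using q2 by (simp add: mult.assoc)
  then have "cnj q * \<omega> = cnj (cnj q)" using qq by simp
  moreover have "cnj q \<noteq> 0" using qq by auto
  ultimately show ?thesis by blast
qed

theorem mainTheorem1: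
  fixes N l :: nat and z :: "nat \<Rightarrow> complex"
  assumes "N \<ge> 2"
    and "N = 2*l+1 \<or> N = 2*l+2"
    and "cmod (Delta N z (N-2)) = 1"
    and "\<And>n. 1 \<le> n \<Longrightarrow> (N = 2*l+1 \<longrightarrow> n \<le> l-1) \<Longrightarrow> (N = 2*l+2 \<longrightarrow> n \<le> l) \<Longrightarrow>
           Delta N z n = cnj (Delta N z (N-2-n)) * Delta N z (N-2)"
    and "\<And>n. n \<in> {1..N} \<Longrightarrow> cmod (z n) \<noteq> 1"
  shows "real (card {n\<in>{1..N}. cmod (z n) < 1}) \<le> 1 + real N / 2"
proof -
  define \<omega> where "\<omega> = Delta N z (N-2)"
  obtain c where cw: "c * \<omega> = cnj c" and c0: "c \<noteq> 0"
    using csq[of \<omega>] assms(3) unfolding \<omega>_def by blast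
  have sym: "\<And>n. n \<le> N - 2 \<Longrightarrow> Delta N z n = \<omega> * cnj (Delta N z (N - 2 - n))"
    unfolding \<omega>_def by (rule symL[OF assms(1-4)])
  define dd where "dd n = c * esym N z n" for n
  have R: "\<And>s. Im (\<Sum>n=0..N. complex_of_real (kap N n) * dd n * EE (nu N n * s)) = 0"
    unfolding dd_def using realR[OF assms(1) cw sym] by blast
  define Y where "Y = (\<lambda>s. \<Sum>n=0..N. Im (dd n * EE (nu N n * s)))"
  define Y' where "Y' = (\<lambda>s. \<Sum>n=0..N. nu N n * Re (dd n * EE (nu N n * s)))"
  define F where "F = (\<lambda>s. 2 * (real N + 1) * (\<Sum>n=0..N. Re (dd n * EE (nu N n * s))) + (\<Sum>n=0..N. nu N n * Re (dd n * EE (nu N n * s))))"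
  have dY: "\<And>s. (Y has_real_derivative Y' s) (at s)" unfolding Y_def Y'_def by (rule ODE(1)[OF R])
  have dF: "\<And>s. (F has_real_derivative (real N * (real N + 2)) * Y s) (at s)"
    unfolding F_def Y_def by (rule ODE(2)[OF R])
  define g where "g = (\<lambda>s. Ln c + \<i> * complex_of_real (- 2 * s) + (\<Sum>j\<in>{1..N}. Lam (z j) s))"
  have eg: "\<And>s. exp (g s) = (\<Sum>n=0..N. dd n * EE (nu N n * s))"
    unfolding g_def dd_def by (rule expg[OF assms(5) c0])
  have Ydef: "\<And>s. Y s = Im (exp (g s))" unfolding eg Y_def by (simp add: Im_sum)
  have Fdef: "\<And>s. F s = 2 * (real N + 1) * Re (exp (g s)) + Y' s"
    unfolding eg F_def Y'_def by (simp add: Re_sum)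
  have cs: "continuous_on UNIV (\<lambda>s. \<Sum>j\<in>{1..N}. Lam (z j) s)"
    by (rule continuous_on_sum) (use contLam assms(5) in auto)
  have cont: "continuous_on UNIV g" unfolding g_def by (intro continuous_intros cs)
  have apos: "real N * (real N + 2) > 0" using assms(1) by simp
  have bpos: "2 * (real N + 1) > 0" by simp
  have lt: "Im (g (2*pi)) < Im (g 0) + 2*pi"
    by (rule core[OF cont _ apos bpos dY dF Ydef Fdef]) simp
  define P where "P j \<longleftrightarrow> cmod (z j) < 1" for j
  define k where "k = card {n\<in>{1..N}. P n}"
  define k2 where "k2 = card {n\<in>{1..N}. \<not> P n}"
  have kk: "k + k2 = N"
  proof -
    have "card ({n\<in>{1..N}. P n} \<union> {n\<in>{1..N}. \<not> P n}) = k + k2"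
      unfolding k_def k2_def by (rule card_Un_disjoint) auto
    moreover have "{n\<in>{1..N}. P n} \<union> {n\<in>{1..N}. \<not> P n} = {1..N}" by auto
    ultimately show ?thesis by simp
  qed
  have sumI: "(\<Sum>j\<in>{1..N}. if P j then 2*pi else - 2*pi) = 2*pi*real k - 2*pi*real k2"
  proof -
    have "(\<Sum>j\<in>{1..N}. if P j then 2*pi else - 2*pi) =
        (\<Sum>j\<in>{1..N} \<inter> {x. P x}. 2*pi) + (\<Sum>j\<in>{1..N} \<inter> - {x. P x}. - 2*pi)"
      by (rule sum.If_cases) simp
    moreover have "{1..N} \<inter> {x. P x} = {n\<in>{1..N}. P n}" "{1..N} \<inter> - {x. P x} = {n\<in>{1..N}. \<not> P n}" by auto
    ultimately show ?thesis unfolding k_def k2_def by simp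
  qed
  have gT: "Im (g (2*pi)) = Im (g 0) - 4*pi + (\<Sum>j\<in>{1..N}. if P j then 2*pi else - 2*pi)"
    unfolding g_def P_def by (simp add: Im_sum ImLam sum.distrib)
  have "2*pi*real k - 2*pi*real k2 < 6*pi" using lt gT sumI by simp
  then have "(2*pi) * (real k - real k2) < (2*pi) * 3" by (simp add: algebra_simps)
  moreover have p: "2*pi > 0" by simp
  ultimately have "real k - real k2 < 3" using mult_less_cancel_left_pos[OF p] by blast
  then have "2 * k < N + 3" using kk by linarith
  then have "real k \<le> 1 + real N / 2" by linarith
  then show ?thesis unfolding k_def P_def .
qed


end
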